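(* For any multigraph $G$, $|P(\mathcal{H}_G,-1)|=T_G(0,2)$, and this number equals the number of totally cyclic orientations of $G$.
   Context: A hypergraph $\mathcal{H}=(\mathcal{V},\mathcal{E})$ consists of a finite vertex set $\mathcal{V}$ and a set $\mathcal{E}$ of subsets of $\mathcal{V}$, each of size at least $1$, called edges. For a positive integer $\lambda$, a weak proper $\lambda$-colouring of $\mathcal{H}$ is a map $\phi:\mathcal{V}\to\{1,\dots,\lambda\}$ such that $|\{\phi(v):v\in e\}|>1$ for every $e\in\mathcal{E}$. $P(\mathcal{H},\lambda)$ denotes the number of weak proper $\lambda$-colourings of $\mathcal{H}$; it is a polynomial in $\lambda$, evaluated at $\lambda=-1$ as a polynomial. For a multigraph $G=(V,E)$ (loops and parallel edges allowed), $\mathcal{H}_G$ is the hypergraph with vertex set $V\cup\{w_e:e\in E\}$ (distinct new vertices $w_e$) and edge set $\{\{u_e,v_e,w_e\}: e\in E\}$, where $u_e,v_e$ are the ends of $e$. The Tutte polynomial is $T_G(x,y)=\sum_{A\subseteq E}(x-1)^{r(E)-r(A)}(y-1)^{|A|-r(A)}$ with $r(A)=|V|-c(A)$, $c(A)$ the number of components of $(V,A)$. A totally cyclic orientation of $G$ is an orientation in which every arc lies in some directed cycle. *)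

theory Defs
  imports Main "HOL-Library.FuncSet" "HOL-Computational_Algebra.Polynomial"
begin

type_synonym 'a hypergraph = "'a set \<times> 'a set set"

definition hg_verts :: "'a hypergraph \<Rightarrow> 'a set" where "hg_verts H = fst H"
definition hg_edges :: "'a hypergraph \<Rightarrow> 'a set set" where "hg_edges H = snd H"

definition weak_colourings :: "'a hypergraph \<Rightarrow> nat \<Rightarrow> ('a \<Rightarrow> nat) set" where
  "weak_colourings H k =
     {\<phi> \<in> hg_verts H \<rightarrow>\<^sub>E {1..k}. \<forall>e\<in>hg_edges H. card (\<phi> ` e) > 1}"

definition hg_chrom_poly :: "'a hypergraph \<Rightarrow> int poly" where
  "hg_chrom_poly H =
     (THE p. \<forall>k::nat. k \<ge> 1 \<longrightarrow> poly p (int k) = int (card (weak_colourings H k)))"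

text \<open>A multigraph is given by a vertex set V, an edge set E and a map ends assigning to each
  edge its pair of ends (the order of the pair is an arbitrary reference direction; a loop has
  equal ends).\<close>
definition multigraph :: "'v set \<Rightarrow> 'e set \<Rightarrow> ('e \<Rightarrow> 'v \<times> 'v) \<Rightarrow> bool" where
  "multigraph V E ends \<longleftrightarrow> finite V \<and> finite E \<and>
     (\<forall>e\<in>E. fst (ends e) \<in> V \<and> snd (ends e) \<in> V)"

definition hyp_of :: "'v set \<Rightarrow> 'e set \<Rightarrow> ('e \<Rightarrow> 'v \<times> 'v) \<Rightarrow> ('v + 'e) hypergraph" where
  "hyp_of V E ends =
     (Inl ` V \<union> Inr ` E,
      (\<lambda>e. {Inl (fst (ends e)), Inl (snd (ends e)), Inr e}) ` E)"

definition adj :: "('e \<Rightarrow> 'v \<times> 'v) \<Rightarrow> 'e set \<Rightarrow> ('v \<times> 'v) set" where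
  "adj ends A = {(u, v). \<exists>e\<in>A. ends e = (u, v) \<or> ends e = (v, u)}"

definition conn_rel :: "'v set \<Rightarrow> ('e \<Rightarrow> 'v \<times> 'v) \<Rightarrow> 'e set \<Rightarrow> ('v \<times> 'v) set" where
  "conn_rel V ends A = {(u, v). u \<in> V \<and> v \<in> V \<and> (u, v) \<in> (adj ends A)\<^sup>*}"

definition num_comps :: "'v set \<Rightarrow> ('e \<Rightarrow> 'v \<times> 'v) \<Rightarrow> 'e set \<Rightarrow> nat" where
  "num_comps V ends A = card (V // conn_rel V ends A)"

definition rank :: "'v set \<Rightarrow> ('e \<Rightarrow> 'v \<times> 'v) \<Rightarrow> 'e set \<Rightarrow> nat" where
  "rank V ends A = card V - num_comps V ends A"

definition tutte :: "'v set \<Rightarrow> 'e set \<Rightarrow> ('e \<Rightarrow> 'v \<times> 'v) \<Rightarrow> int \<Rightarrow> int \<Rightarrow> int" where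
  "tutte V E ends x y =
     (\<Sum>A\<in>Pow E. (x - 1) ^ (rank V ends E - rank V ends A) *
                 (y - 1) ^ (card A - rank V ends A))"

text \<open>An orientation assigns to each edge a boolean: True = directed from fst (ends e) to
  snd (ends e), False = the reverse direction.\<close>
definition tail :: "('e \<Rightarrow> 'v \<times> 'v) \<Rightarrow> ('e \<Rightarrow> bool) \<Rightarrow> 'e \<Rightarrow> 'v" where
  "tail ends o' e = (if o' e then fst (ends e) else snd (ends e))"

definition head :: "('e \<Rightarrow> 'v \<times> 'v) \<Rightarrow> ('e \<Rightarrow> bool) \<Rightarrow> 'e \<Rightarrow> 'v" where
  "head ends o' e = (if o' e then snd (ends e) else fst (ends e))"

definition dir_cycle :: "'e set \<Rightarrow> ('e \<Rightarrow> 'v \<times> 'v) \<Rightarrow> ('e \<Rightarrow> bool) \<Rightarrow> 'e list \<Rightarrow> bool" where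
  "dir_cycle E ends o' cs \<longleftrightarrow> cs \<noteq> [] \<and> distinct cs \<and> set cs \<subseteq> E \<and>
     distinct (map (tail ends o') cs) \<and>
     (\<forall>i < length cs. head ends o' (cs ! i) = tail ends o' (cs ! ((i + 1) mod length cs)))"

definition totally_cyclic :: "'e set \<Rightarrow> ('e \<Rightarrow> 'v \<times> 'v) \<Rightarrow> ('e \<Rightarrow> bool) \<Rightarrow> bool" where
  "totally_cyclic E ends o' \<longleftrightarrow> (\<forall>e\<in>E. \<exists>cs. dir_cycle E ends o' cs \<and> e \<in> set cs)"

definition totally_cyclic_orientations :: "'e set \<Rightarrow> ('e \<Rightarrow> 'v \<times> 'v) \<Rightarrow> ('e \<Rightarrow> bool) set" where
  "totally_cyclic_orientations E ends =
     {o' \<in> E \<rightarrow>\<^sub>E (UNIV :: bool set). totally_cyclic E ends o'}"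

end

theory Submission
  imports Defs
begin

lemma rtrancl_insert_redundant:
  assumes "(a,b) \<in> S\<^sup>*" shows "(insert (a,b) S)\<^sup>* = S\<^sup>*"
  using assms by (auto simp: rtrancl_insert intro: rtrancl_trans)

lemma key_count:
  assumes arcsS: "\<forall>f\<in>F. (t f, h f) \<in> S"
  and nb: "(\<forall>f\<in>F. (h f, t f) \<in> S\<^sup>*) \<Longrightarrow> (u,v) \<in> S\<^sup>* \<and> (v,u) \<in> S\<^sup>*"
  shows "(if (v,u) \<in> (insert (u,v) S)\<^sup>* \<and> (\<forall>f\<in>F. (h f,t f) \<in> (insert (u,v) S)\<^sup>*) then 1 else 0)
       + (if (u,v) \<in> (insert (v,u) S)\<^sup>* \<and> (\<forall>f\<in>F. (h f,t f) \<in> (insert (v,u) S)\<^sup>*) then 1 else 0)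
       = (if \<forall>f\<in>F. (h f,t f) \<in> S\<^sup>* then 1 else 0)
         + (if \<forall>f\<in>F. (h f,t f) \<in> (insert (u,v) (insert (v,u) S))\<^sup>* then (1::int) else 0)"
proof -
  let ?R1 = "(insert (u,v) (insert (v,u) S))\<^sup>*"
  let ?T = "\<forall>f\<in>F. (h f,t f) \<in> S\<^sup>*"
  let ?T' = "\<forall>f\<in>F. (h f,t f) \<in> ?R1"
  have m1: "(insert (u,v) S)\<^sup>* \<subseteq> ?R1" by (rule rtrancl_mono) auto
  have m2: "(insert (v,u) S)\<^sup>* \<subseteq> ?R1" by (rule rtrancl_mono) auto
  have m0: "S\<^sup>* \<subseteq> ?R1" by (rule rtrancl_mono) auto
  have A: "(v,u) \<in> (insert (u,v) S)\<^sup>* \<longleftrightarrow> (v,u) \<in> S\<^sup>*" by (auto simp: rtrancl_insert)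
  have B: "(u,v) \<in> (insert (v,u) S)\<^sup>* \<longleftrightarrow> (u,v) \<in> S\<^sup>*" by (auto simp: rtrancl_insert)
  have Rq: "(v,u) \<in> S\<^sup>* \<Longrightarrow> ?R1 = (insert (u,v) S)\<^sup>*"
  proof -
    assume q: "(v,u) \<in> S\<^sup>*"
    have "(v,u) \<in> (insert (u,v) S)\<^sup>*" using q A by simp
    then have "(insert (v,u) (insert (u,v) S))\<^sup>* = (insert (u,v) S)\<^sup>*"
      by (rule rtrancl_insert_redundant)
    moreover have "insert (u,v) (insert (v,u) S) = insert (v,u) (insert (u,v) S)" by auto
    ultimately show ?thesis by simp
  qed
  have Rp: "(u,v) \<in> S\<^sup>* \<Longrightarrow> ?R1 = (insert (v,u) S)\<^sup>*"
  proof -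
    assume p: "(u,v) \<in> S\<^sup>*"
    have "(u,v) \<in> (insert (v,u) S)\<^sup>*" using p B by simp
    then show ?thesis by (rule rtrancl_insert_redundant)
  qed
  have Rpq: "(u,v) \<in> S\<^sup>* \<Longrightarrow> (v,u) \<in> S\<^sup>* \<Longrightarrow> ?R1 = S\<^sup>*"
    using Rp by (simp add: rtrancl_insert_redundant)
  show ?thesis
  proof (cases ?T)
    case True
    with nb have pq: "(u,v) \<in> S\<^sup>*" "(v,u) \<in> S\<^sup>*" by auto
    have "S\<^sup>* \<subseteq> (insert (u,v) S)\<^sup>*" by (rule rtrancl_mono) auto
    moreover have "S\<^sup>* \<subseteq> (insert (v,u) S)\<^sup>*" by (rule rtrancl_mono) auto
    ultimately
    show ?thesis using True pq m0 A B by auto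
  next
    case nT: False
    show ?thesis
    proof (cases ?T')
      case False
      then show ?thesis using nT m1 m2 by auto
    next
      case T': True
      have pq: "(u,v) \<in> S\<^sup>* \<or> (v,u) \<in> S\<^sup>*"
      proof -
        obtain f where f: "f \<in> F" "(h f, t f) \<notin> S\<^sup>*" using nT by auto
        have th: "(t f, h f) \<in> S" using arcsS f by auto
        have "(h f, t f) \<in> ?R1" using T' f by auto
        then show ?thesis using f th
          by (auto simp: rtrancl_insert intro: rtrancl_trans rtrancl_into_rtrancl converse_rtrancl_into_rtrancl)
      qed
      have npq: "\<not> ((u,v) \<in> S\<^sup>* \<and> (v,u) \<in> S\<^sup>*)" using Rpq nT T' by auto
      show ?thesis
      proof (cases "(v,u) \<in> S\<^sup>*")
        case True
        then show ?thesis using Rq[OF True] T' nT A B npq by auto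
      next
        case False
        with pq have p: "(u,v) \<in> S\<^sup>*" by auto
        then show ?thesis using Rp[OF p] T' nT A B False by auto
      qed
    qed
  qed
qed

definition arcs :: "('e \<Rightarrow> 'v \<times> 'v) \<Rightarrow> ('e \<Rightarrow> bool) \<Rightarrow> 'e set \<Rightarrow> ('v \<times> 'v) set" where
  "arcs ends o' A = (\<lambda>f. (tail ends o' f, head ends o' f)) ` A"

definition tcg :: "('e \<Rightarrow> 'v \<times> 'v) \<Rightarrow> 'e set \<Rightarrow> 'e set \<Rightarrow> ('e \<Rightarrow> bool) \<Rightarrow> bool" where
  "tcg ends C E o' \<longleftrightarrow> (\<forall>e\<in>E. (head ends o' e, tail ends o' e) \<in> (adj ends C \<union> arcs ends o' E)\<^sup>*)"

definition NN :: "('e \<Rightarrow> 'v \<times> 'v) \<Rightarrow> 'e set \<Rightarrow> 'e set \<Rightarrow> nat" where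
  "NN ends C E = card {o' \<in> E \<rightarrow>\<^sub>E (UNIV::bool set). tcg ends C E o'}"

lemma adj_union: "adj ends (A \<union> B) = adj ends A \<union> adj ends B"
  unfolding adj_def by auto

lemma adj_insert: "adj ends (insert e A) =
   insert (fst (ends e), snd (ends e)) (insert (snd (ends e), fst (ends e)) (adj ends A))"
  unfolding adj_def by (cases "ends e") auto

lemma adj_empty[simp]: "adj ends {} = {}"
  unfolding adj_def by auto

lemma adj_rtrancl_sym: "(x,y) \<in> (adj ends A)\<^sup>* \<Longrightarrow> (y,x) \<in> (adj ends A)\<^sup>*"
proof -
  assume "(x,y) \<in> (adj ends A)\<^sup>*"
  then have "(y,x) \<in> ((adj ends A)\<^sup>*)\<inverse>" by simp
  also have "((adj ends A)\<^sup>*)\<inverse> = ((adj ends A)\<inverse>)\<^sup>*" by (simp add: rtrancl_converse)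
  also have "(adj ends A)\<inverse> = adj ends A" unfolding adj_def by auto
  finally show ?thesis .
qed

lemma arcs_insert: "arcs ends o' (insert e A) = insert (tail ends o' e, head ends o' e) (arcs ends o' A)"
  unfolding arcs_def by auto

lemma arcs_upd: "e \<notin> A \<Longrightarrow> arcs ends (o'(e:=b)) A = arcs ends o' A"
  unfolding arcs_def tail_def head_def by (auto intro!: image_cong)

lemma tail_upd: "f \<noteq> e \<Longrightarrow> tail ends (o'(e:=b)) f = tail ends o' f"
  unfolding tail_def by auto
lemma head_upd: "f \<noteq> e \<Longrightarrow> head ends (o'(e:=b)) f = head ends o' f"
  unfolding head_def by auto

lemma card_filter_sum: "finite X \<Longrightarrow> int (card {x\<in>X. P x}) = (\<Sum>x\<in>X. if P x then 1 else 0)"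
  by (simp add: sum.inter_filter[symmetric])

lemma NN_empty: "NN ends C {} = 1"
  unfolding NN_def tcg_def by simp

lemma NN_bridge:
  assumes "e \<in> E" and nb: "(fst (ends e), snd (ends e)) \<notin> (adj ends (C \<union> (E - {e})))\<^sup>*"
  shows "\<not> tcg ends C E o'"
proof
  assume tc: "tcg ends C E o'"
  let ?S = "adj ends C \<union> arcs ends o' (E - {e})"
  have E: "E = insert e (E - {e})" using assms(1) by auto
  have "(head ends o' e, tail ends o' e) \<in> (adj ends C \<union> arcs ends o' E)\<^sup>*"
    using tc assms(1) unfolding tcg_def by auto
  also have "adj ends C \<union> arcs ends o' E = insert (tail ends o' e, head ends o' e) ?S"
    by (subst E, subst arcs_insert) auto
  finally have "(head ends o' e, tail ends o' e) \<in> ?S\<^sup>*" by (auto simp: rtrancl_insert)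
  moreover have "?S \<subseteq> adj ends (C \<union> (E - {e}))"
    unfolding adj_union arcs_def adj_def tail_def head_def by auto
  ultimately have hh: "(head ends o' e, tail ends o' e) \<in> (adj ends (C \<union> (E - {e})))\<^sup>*"
    using rtrancl_mono by blast
  show False
  proof (cases "o' e")
    case True
    then show ?thesis using hh nb adj_rtrancl_sym unfolding head_def tail_def by fastforce
  next
    case False
    then show ?thesis using hh nb unfolding head_def tail_def by auto
  qed
qed

lemma NN_step:
  assumes fin: "finite E" and eE: "e \<in> E"
    and nb: "(fst (ends e), snd (ends e)) \<in> (adj ends (C \<union> (E - {e})))\<^sup>*"
  shows "int (NN ends C E) = int (NN ends C (E - {e})) + int (NN ends (insert e C) (E - {e}))"
proof -
  define E' where "E' = E - {e}"
  have E: "E = insert e E'" and eE': "e \<notin> E'" and finE': "finite E'"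
    using eE fin unfolding E'_def by auto
  define u where "u = fst (ends e)"
  define v where "v = snd (ends e)"
  have "int (NN ends C E) = (\<Sum>o'\<in>E \<rightarrow>\<^sub>E (UNIV::bool set). if tcg ends C E o' then 1 else 0)"
    unfolding NN_def by (rule card_filter_sum) (simp add: fin finite_PiE)
  also have "\<dots> = (\<Sum>p\<in>(UNIV::bool set) \<times> (E' \<rightarrow>\<^sub>E (UNIV::bool set)).
        if tcg ends C E ((snd p)(e := fst p)) then 1 else 0)"
  proof -
    have inj: "inj_on (\<lambda>(y, g). g(e := y)) ((UNIV::bool set) \<times> (E' \<rightarrow>\<^sub>E (UNIV::bool set)))"
    proof (rule inj_onI, clarsimp)
      fix a b :: bool and g1 g2 :: "'a \<Rightarrow> bool"
      assume g1: "g1 \<in> E' \<rightarrow>\<^sub>E UNIV" and g2: "g2 \<in> E' \<rightarrow>\<^sub>E UNIV" and eq: "g1(e := a) = g2(e := b)"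
      have "a = b" using fun_cong[OF eq, of e] by simp
      moreover have "g1 = g2"
      proof
        fix x show "g1 x = g2 x"
        proof (cases "x = e")
          case True then show ?thesis using g1 g2 eE' by (auto simp: PiE_def extensional_def)
        next
          case False then show ?thesis using fun_cong[OF eq, of x] by simp
        qed
      qed
      ultimately show "a = b \<and> g1 = g2" by simp
    qed
    show ?thesis
      unfolding E PiE_insert_eq
      by (subst sum.reindex[OF inj]) (simp add: split_def)
  qed
  also have "\<dots> = (\<Sum>g\<in>E' \<rightarrow>\<^sub>E (UNIV::bool set). \<Sum>y\<in>(UNIV::bool set).
        if tcg ends C E (g(e := y)) then 1 else 0)"
    by (subst sum.swap) (simp add: sum.cartesian_product split_def)
  also have "\<dots> = (\<Sum>g\<in>E' \<rightarrow>\<^sub>E (UNIV::bool set).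
        (if tcg ends C E' g then 1 else 0) + (if tcg ends (insert e C) E' g then 1 else 0))"
  proof (rule sum.cong[OF refl])
    fix g assume g: "g \<in> E' \<rightarrow>\<^sub>E (UNIV::bool set)"
    let ?S = "adj ends C \<union> arcs ends g E'"
    have hT: "head ends (g(e:=True)) e = v" "tail ends (g(e:=True)) e = u"
      "head ends (g(e:=False)) e = u" "tail ends (g(e:=False)) e = v"
      unfolding head_def tail_def u_def v_def by auto
    have hf: "\<And>f y. f \<in> E' \<Longrightarrow> head ends (g(e:=y)) f = head ends g f \<and> tail ends (g(e:=y)) f = tail ends g f"
      using eE' head_upd tail_upd by metis
    have arcsE: "\<And>y. arcs ends (g(e:=y)) E = insert (tail ends (g(e:=y)) e, head ends (g(e:=y)) e) (arcs ends g E')"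
      unfolding E arcs_insert using arcs_upd[OF eE'] by auto
    have t1: "tcg ends C E (g(e:=True)) \<longleftrightarrow>
       (v,u) \<in> (insert (u,v) ?S)\<^sup>* \<and> (\<forall>f\<in>E'. (head ends g f, tail ends g f) \<in> (insert (u,v) ?S)\<^sup>*)"
    proof -
      have "adj ends C \<union> arcs ends (g(e:=True)) E = insert (u,v) ?S" using arcsE[of True] hT by auto
      then show ?thesis unfolding tcg_def using hT hf E by auto
    qed
    have t2: "tcg ends C E (g(e:=False)) \<longleftrightarrow>
       (u,v) \<in> (insert (v,u) ?S)\<^sup>* \<and> (\<forall>f\<in>E'. (head ends g f, tail ends g f) \<in> (insert (v,u) ?S)\<^sup>*)"
    proof -
      have "adj ends C \<union> arcs ends (g(e:=False)) E = insert (v,u) ?S" using arcsE[of False] hT by auto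
      then show ?thesis unfolding tcg_def using hT hf E by auto
    qed
    have t3: "tcg ends C E' g \<longleftrightarrow> (\<forall>f\<in>E'. (head ends g f, tail ends g f) \<in> ?S\<^sup>*)"
      unfolding tcg_def by simp
    have t4: "tcg ends (insert e C) E' g \<longleftrightarrow>
       (\<forall>f\<in>E'. (head ends g f, tail ends g f) \<in> (insert (u,v) (insert (v,u) ?S))\<^sup>*)"
      unfolding tcg_def adj_insert u_def v_def by simp
    have arcsS: "\<forall>f\<in>E'. (tail ends g f, head ends g f) \<in> ?S" unfolding arcs_def by auto
    have nb': "(\<forall>f\<in>E'. (head ends g f, tail ends g f) \<in> ?S\<^sup>*) \<Longrightarrow> (u,v) \<in> ?S\<^sup>* \<and> (v,u) \<in> ?S\<^sup>*"
    proof -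
      assume T: "\<forall>f\<in>E'. (head ends g f, tail ends g f) \<in> ?S\<^sup>*"
      have sub: "adj ends (C \<union> E') \<subseteq> ?S\<^sup>*"
      proof
        fix p assume "p \<in> adj ends (C \<union> E')"
        then obtain x y f where p: "p = (x,y)" and f: "f \<in> C \<union> E'" and xy: "ends f = (x,y) \<or> ends f = (y,x)"
          unfolding adj_def by auto
        show "p \<in> ?S\<^sup>*"
        proof (cases "f \<in> C")
          case True
          then have "(x,y) \<in> adj ends C" using xy unfolding adj_def by auto
          then show ?thesis using p by auto
        next
          case False
          then have fE: "f \<in> E'" using f by auto
          have a: "(tail ends g f, head ends g f) \<in> ?S\<^sup>*" using arcsS fE by auto
          have b: "(head ends g f, tail ends g f) \<in> ?S\<^sup>*" using T fE by auto
          show ?thesis using a b xy p unfolding head_def tail_def by (cases "g f") auto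
        qed
      qed
      have uv0: "(u,v) \<in> (adj ends (C \<union> E'))\<^sup>*" using nb unfolding u_def v_def E'_def .
      have uv: "(u,v) \<in> ?S\<^sup>*" by (rule subsetD[OF rtrancl_subset_rtrancl[OF sub] uv0])
      have vu0: "(v,u) \<in> (adj ends (C \<union> E'))\<^sup>*" by (rule adj_rtrancl_sym[OF uv0])
      have vu: "(v,u) \<in> ?S\<^sup>*" by (rule subsetD[OF rtrancl_subset_rtrancl[OF sub] vu0])
      show ?thesis using uv vu by simp
    qed
    have "(\<Sum>y\<in>(UNIV::bool set). if tcg ends C E (g(e := y)) then 1 else 0)
        = (if tcg ends C E (g(e:=True)) then 1 else 0) + (if tcg ends C E (g(e:=False)) then (1::int) else 0)"
      by (simp add: UNIV_bool)
    also have "\<dots> = (if tcg ends C E' g then 1 else 0) + (if tcg ends (insert e C) E' g then 1 else 0)"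
      unfolding t1 t2 t3 t4 by (rule key_count[OF arcsS nb'])
    finally show "(\<Sum>y\<in>(UNIV::bool set). if tcg ends C E (g(e := y)) then 1 else 0)
        = (if tcg ends C E' g then 1 else 0) + (if tcg ends (insert e C) E' g then (1::int) else 0)" .
  qed
  also have "\<dots> = int (NN ends C E') + int (NN ends (insert e C) E')"
    unfolding NN_def sum.distrib
    by (simp add: card_filter_sum finE' finite_PiE)
  finally show ?thesis unfolding E'_def .
qed

lemma adj_mono: "A \<subseteq> B \<Longrightarrow> adj ends A \<subseteq> adj ends B"
  unfolding adj_def by auto

lemma quotient_image: "V // r = (\<lambda>x. r `` {x}) ` V"
  unfolding quotient_def by auto

lemma conn_class: "x \<in> V \<Longrightarrow> conn_rel V ends A `` {x} = {y\<in>V. (x,y) \<in> (adj ends A)\<^sup>*}"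
  unfolding conn_rel_def by auto

lemma num_comps_alt: "num_comps V ends A = card ((\<lambda>x. {y\<in>V. (x,y) \<in> (adj ends A)\<^sup>*}) ` V)"
proof -
  have "V // conn_rel V ends A = (\<lambda>x. {y\<in>V. (x,y) \<in> (adj ends A)\<^sup>*}) ` V"
    unfolding quotient_image by (rule image_cong[OF refl conn_class])
  then show ?thesis unfolding num_comps_def by simp
qed

lemma num_comps_le: "finite V \<Longrightarrow> num_comps V ends A \<le> card V"
  unfolding num_comps_alt by (rule card_image_le)

lemma num_comps_mono:
  assumes "finite V" "A \<subseteq> B" shows "num_comps V ends B \<le> num_comps V ends A"
proof -
  let ?KA = "\<lambda>x. {y\<in>V. (x,y) \<in> (adj ends A)\<^sup>*}"
  let ?KB = "\<lambda>x. {y\<in>V. (x,y) \<in> (adj ends B)\<^sup>*}"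
  let ?G = "\<lambda>X. {z\<in>V. \<exists>y\<in>X. (y,z) \<in> (adj ends B)\<^sup>*}"
  have sub: "(adj ends A)\<^sup>* \<subseteq> (adj ends B)\<^sup>*" using rtrancl_mono[OF adj_mono[OF assms(2)]] .
  have pt: "?KB x = ?G (?KA x)" if "x \<in> V" for x
  proof
    show "?KB x \<subseteq> ?G (?KA x)" using that by auto
    show "?G (?KA x) \<subseteq> ?KB x"
    proof
      fix z assume "z \<in> ?G (?KA x)"
      then obtain y where "z \<in> V" "(x,y) \<in> (adj ends A)\<^sup>*" "(y,z) \<in> (adj ends B)\<^sup>*" by auto
      then show "z \<in> ?KB x" using sub rtrancl_trans[of x y "adj ends B" z] by auto
    qed
  qed
  have eq: "?KB ` V = ?G ` (?KA ` V)"
    unfolding image_image by (rule image_cong[OF refl pt])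
  have fin: "finite (?KA ` V)" using assms(1) by simp
  have "card (?KB ` V) \<le> card (?KA ` V)" unfolding eq by (rule card_image_le[OF fin])
  then show ?thesis unfolding num_comps_alt .
qed

lemma num_comps_nb:
  assumes "(fst (ends e), snd (ends e)) \<in> (adj ends A)\<^sup>*"
  shows "num_comps V ends (insert e A) = num_comps V ends A"
proof -
  have s: "(snd (ends e), fst (ends e)) \<in> (adj ends A)\<^sup>*" by (rule adj_rtrancl_sym[OF assms])
  have e1: "(insert (snd (ends e), fst (ends e)) (adj ends A))\<^sup>* = (adj ends A)\<^sup>*"
    by (rule rtrancl_insert_redundant[OF s])
  have "(fst (ends e), snd (ends e)) \<in> (insert (snd (ends e), fst (ends e)) (adj ends A))\<^sup>*"
    using assms unfolding e1 .
  then have "(insert (fst (ends e), snd (ends e)) (insert (snd (ends e), fst (ends e)) (adj ends A)))\<^sup>*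
     = (insert (snd (ends e), fst (ends e)) (adj ends A))\<^sup>*"
    by (rule rtrancl_insert_redundant)
  then have "(adj ends (insert e A))\<^sup>* = (adj ends A)\<^sup>*"
    unfolding adj_insert e1 .
  then show ?thesis unfolding num_comps_def conn_rel_def by simp
qed

lemma star_two:
  "(x,y) \<in> (insert (u,v) (insert (v,u) R))\<^sup>* \<longleftrightarrow>
    (x,y) \<in> R\<^sup>* \<or> ((x,u) \<in> R\<^sup>* \<and> (v,y) \<in> R\<^sup>*) \<or> ((x,v) \<in> R\<^sup>* \<and> (u,y) \<in> R\<^sup>*)"
proof -
  have S1: "\<And>a b. (a,b) \<in> (insert (v,u) R)\<^sup>* \<longleftrightarrow> (a,b)\<in>R\<^sup>* \<or> ((a,v)\<in>R\<^sup>* \<and> (u,b)\<in>R\<^sup>*)"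
    by (simp add: rtrancl_insert)
  have "(x,y) \<in> (insert (u,v) (insert (v,u) R))\<^sup>* \<longleftrightarrow>
     (x,y) \<in> (insert (v,u) R)\<^sup>* \<or> ((x,u) \<in> (insert (v,u) R)\<^sup>* \<and> (v,y) \<in> (insert (v,u) R)\<^sup>*)"
    using rtrancl_insert[of u v "insert (v,u) R"] by blast
  also have "\<dots> \<longleftrightarrow> (x,y) \<in> R\<^sup>* \<or> ((x,u) \<in> R\<^sup>* \<and> (v,y) \<in> R\<^sup>*) \<or> ((x,v) \<in> R\<^sup>* \<and> (u,y) \<in> R\<^sup>*)"
    unfolding S1 by (meson rtrancl_trans)
  finally show ?thesis .
qed

lemma class_eq: "(x,a) \<in> R\<^sup>* \<Longrightarrow> (a,x) \<in> R\<^sup>* \<Longrightarrow> ((x,y) \<in> R\<^sup>* \<longleftrightarrow> (a,y) \<in> R\<^sup>*)"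
  by (meson rtrancl_trans)

lemma num_comps_merge:
  assumes fin: "finite V" and uv: "fst (ends e) \<in> V" "snd (ends e) \<in> V"
    and nc: "(fst (ends e), snd (ends e)) \<notin> (adj ends A)\<^sup>*"
  shows "num_comps V ends A = Suc (num_comps V ends (insert e A))"
proof -
  define u where "u = fst (ends e)"
  define v where "v = snd (ends e)"
  define R where "R = adj ends A"
  have sym: "\<And>a b. (a,b) \<in> R\<^sup>* \<Longrightarrow> (b,a) \<in> R\<^sup>*" unfolding R_def by (rule adj_rtrancl_sym)
  define K where "K = (\<lambda>x. {y\<in>V. (x,y) \<in> R\<^sup>*})"
  define K' where "K' = (\<lambda>x. {y\<in>V. (x,y) \<in> (adj ends (insert e A))\<^sup>*})"
  have adjI: "adj ends (insert e A) = insert (u,v) (insert (v,u) R)"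
    unfolding adj_insert u_def v_def R_def ..
  have ncuv: "(u,v) \<notin> R\<^sup>*" using nc unfolding u_def v_def R_def .
  have uV: "u \<in> V" "v \<in> V" using uv unfolding u_def v_def by auto
  define W where "W = {x\<in>V. x \<notin> K u \<and> x \<notin> K v}"
  have K'x: "K' x = {y\<in>V. (x,y)\<in>R\<^sup>* \<or> ((x,u)\<in>R\<^sup>* \<and> (v,y)\<in>R\<^sup>*) \<or> ((x,v)\<in>R\<^sup>* \<and> (u,y)\<in>R\<^sup>*)}" for x
    unfolding K'_def adjI star_two ..
  have Kmem: "y \<in> K x \<longleftrightarrow> y \<in> V \<and> (x,y) \<in> R\<^sup>*" for x y unfolding K_def by simp
  have Kx_eq: "K x = K a" if "x \<in> K a" for x a
  proof -
    have xa: "(a,x) \<in> R\<^sup>*" using that Kmem by auto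
    have ax: "(x,a) \<in> R\<^sup>*" using sym[OF xa] .
    show ?thesis unfolding K_def using class_eq[OF ax xa] by auto
  qed
  have K'eq: "K' x = (if x \<in> K u \<union> K v then K u \<union> K v else K x)" if xV: "x \<in> V" for x
  proof (cases "x \<in> K u")
    case True
    have ux: "(u,x) \<in> R\<^sup>*" using True Kmem by auto
    have xu: "(x,u) \<in> R\<^sup>*" using sym[OF ux] .
    have "K' x = K u \<union> K v" unfolding K'x K_def class_eq[OF xu ux] by auto
    then show ?thesis using True by simp
  next
    case nu: False
    show ?thesis
    proof (cases "x \<in> K v")
      case True
      have vx: "(v,x) \<in> R\<^sup>*" using True Kmem by auto
      have xv: "(x,v) \<in> R\<^sup>*" using sym[OF vx] .
      have "K' x = K u \<union> K v" unfolding K'x K_def class_eq[OF xv vx] by auto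
      then show ?thesis using True by simp
    next
      case False
      have "(x,u) \<notin> R\<^sup>*"
      proof
        assume "(x,u) \<in> R\<^sup>*" then have "(u,x) \<in> R\<^sup>*" by (rule sym)
        then show False using nu xV Kmem by auto
      qed
      moreover have "(x,v) \<notin> R\<^sup>*"
      proof
        assume "(x,v) \<in> R\<^sup>*" then have "(v,x) \<in> R\<^sup>*" by (rule sym)
        then show False using False xV Kmem by auto
      qed
      ultimately have "K' x = K x" unfolding K'x K_def by auto
      then show ?thesis using nu False by simp
    qed
  qed
  have uKu: "u \<in> K u" and vKv: "v \<in> K v" using uV unfolding K_def by auto
  have img': "K' ` V = insert (K u \<union> K v) (K ` W)"
  proof
    show "K' ` V \<subseteq> insert (K u \<union> K v) (K ` W)"
      using K'eq unfolding W_def by auto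
    have "K' u = K u \<union> K v" using K'eq[OF uV(1)] uKu by simp
    moreover have "K ` W \<subseteq> K' ` V"
    proof
      fix X assume "X \<in> K ` W"
      then obtain w where w: "w \<in> W" "X = K w" by auto
      then have "K' w = K w" using K'eq[of w] unfolding W_def by auto
      then show "X \<in> K' ` V" using w unfolding W_def by auto
    qed
    ultimately show "insert (K u \<union> K v) (K ` W) \<subseteq> K' ` V" using uV by auto
  qed
  have img: "K ` V = insert (K u) (insert (K v) (K ` W))"
  proof
    show "K ` V \<subseteq> insert (K u) (insert (K v) (K ` W))"
    proof
      fix X assume "X \<in> K ` V"
      then obtain x where x: "x \<in> V" "X = K x" by auto
      show "X \<in> insert (K u) (insert (K v) (K ` W))"
      proof (cases "x \<in> K u")
        case True then show ?thesis using Kx_eq x by auto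
      next
        case False
        show ?thesis
        proof (cases "x \<in> K v")
          case True then show ?thesis using Kx_eq x by auto
        next
          case nv: False then have "x \<in> W" using False x unfolding W_def by auto
          then show ?thesis using x by auto
        qed
      qed
    qed
    show "insert (K u) (insert (K v) (K ` W)) \<subseteq> K ` V" using uV unfolding W_def by auto
  qed
  have nW: "u \<notin> K w \<and> v \<notin> K w" if "w \<in> W" for w
  proof -
    have "w \<in> V" "w \<notin> K u" "w \<notin> K v" using that unfolding W_def by auto
    then have a: "w \<in> V" "(u,w) \<notin> R\<^sup>*" "(v,w) \<notin> R\<^sup>*" using Kmem by auto
    have "(w,u) \<notin> R\<^sup>*" using a(2) sym by metis
    moreover have "(w,v) \<notin> R\<^sup>*" using a(3) sym by metis
    ultimately show ?thesis using Kmem by auto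
  qed
  have vKu: "v \<notin> K u" using ncuv Kmem by auto
  have finW: "finite (K ` W)" using fin unfolding W_def by auto
  have n1: "K u \<notin> K ` W" using nW uKu by blast
  have n2: "K v \<notin> K ` W" using nW vKv by blast
  have n3: "K u \<union> K v \<notin> K ` W" using nW uKu by blast
  have n4: "K u \<noteq> K v" using vKu vKv by blast
  have c1: "num_comps V ends A = card (K ` V)"
    unfolding num_comps_alt K_def R_def ..
  have c1': "card (K ` V) = card (K ` W) + 2"
    unfolding img using finW n1 n2 n4 by simp
  have c2: "num_comps V ends (insert e A) = card (K' ` V)"
    unfolding num_comps_alt K'_def ..
  have c2': "card (K' ` V) = card (K ` W) + 1"
    unfolding img' using finW n3 by simp
  show ?thesis using c1 c1' c2 c2' by simp
qed

definition DD :: "'v set \<Rightarrow> ('e \<Rightarrow> 'v \<times> 'v) \<Rightarrow> 'e set \<Rightarrow> 'e set \<Rightarrow> int" where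
  "DD V ends C E = (\<Sum>A\<in>Pow E. (-1::int) ^ num_comps V ends (C \<union> A))"

lemma DD_empty: "DD V ends C {} = (-1) ^ num_comps V ends C"
  unfolding DD_def by simp

lemma DD_step:
  assumes fin: "finite E" and eE: "e \<in> E"
  shows "DD V ends C E = DD V ends C (E - {e}) + DD V ends (insert e C) (E - {e})"
proof -
  define E' where "E' = E - {e}"
  have E: "E = insert e E'" and eE': "e \<notin> E'" and finE': "finite E'"
    using eE fin unfolding E'_def by auto
  have P: "Pow E = Pow E' \<union> insert e ` Pow E'" unfolding E by (rule Pow_insert)
  have disj: "Pow E' \<inter> insert e ` Pow E' = {}" using eE' by auto
  have inj: "inj_on (insert e) (Pow E')"
    using eE' by (auto simp: inj_on_def)
  have "DD V ends C E = (\<Sum>A\<in>Pow E'. (-1::int) ^ num_comps V ends (C \<union> A))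
      + (\<Sum>A\<in>insert e ` Pow E'. (-1::int) ^ num_comps V ends (C \<union> A))"
    unfolding DD_def P by (rule sum.union_disjoint) (use finE' disj in auto)
  also have "(\<Sum>A\<in>insert e ` Pow E'. (-1::int) ^ num_comps V ends (C \<union> A))
      = (\<Sum>A\<in>Pow E'. (-1::int) ^ num_comps V ends (insert e C \<union> A))"
    by (subst sum.reindex[OF inj]) simp
  finally show ?thesis unfolding DD_def E'_def by simp
qed

lemma neg1_sq: "(-1::int) ^ n * (-1) ^ n = 1"
  by (induct n) auto

lemma NN_zero:
  assumes "e \<in> E" "(fst (ends e), snd (ends e)) \<notin> (adj ends (C \<union> (E - {e})))\<^sup>*"
  shows "NN ends C E = 0"
proof -
  have "{o' \<in> E \<rightarrow>\<^sub>E (UNIV::bool set). tcg ends C E o'} = {}"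
    using NN_bridge[OF assms] by auto
  then show ?thesis unfolding NN_def by (metis card.empty)
qed

lemma main_NN:
  assumes finV: "finite V"
  shows "finite E \<Longrightarrow> (\<forall>f\<in>C \<union> E. fst (ends f) \<in> V \<and> snd (ends f) \<in> V) \<Longrightarrow>
    int (NN ends C E) = (-1) ^ num_comps V ends (C \<union> E) * DD V ends C E"
proof (induction E arbitrary: C rule: finite_psubset_induct)
  case (psubset E C)
  show ?case
  proof (cases "E = {}")
    case True
    then show ?thesis by (simp add: NN_empty DD_empty neg1_sq)
  next
    case ne: False
    show ?thesis
    proof (cases "\<exists>e\<in>E. (fst (ends e), snd (ends e)) \<in> (adj ends (C \<union> (E - {e})))\<^sup>*")
      case True
      then obtain e where eE: "e \<in> E" and nb: "(fst (ends e), snd (ends e)) \<in> (adj ends (C \<union> (E - {e})))\<^sup>*"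
        by blast
      have ps: "E - {e} \<subset> E" using eE by auto
      have IH1: "int (NN ends C (E - {e})) = (-1) ^ num_comps V ends (C \<union> (E - {e})) * DD V ends C (E - {e})"
        using psubset.IH[OF ps, of C] psubset.prems by auto
      have IH2: "int (NN ends (insert e C) (E - {e})) =
          (-1) ^ num_comps V ends (insert e C \<union> (E - {e})) * DD V ends (insert e C) (E - {e})"
        using psubset.IH[OF ps, of "insert e C"] psubset.prems eE by auto
      have CE: "insert e (C \<union> (E - {e})) = C \<union> E" "insert e C \<union> (E - {e}) = C \<union> E" using eE by auto
      have c1: "num_comps V ends (C \<union> (E - {e})) = num_comps V ends (C \<union> E)"
        using num_comps_nb[OF nb, of V] unfolding CE(1) by simp
      show ?thesis
        using NN_step[OF psubset.hyps(1) eE nb] DD_step[OF psubset.hyps(1) eE, of V ends C]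
          IH1 IH2 c1 CE(2) by (simp add: algebra_simps)
    next
      case False
      then have allb: "\<And>f. f \<in> E \<Longrightarrow> (fst (ends f), snd (ends f)) \<notin> (adj ends (C \<union> (E - {f})))\<^sup>*"
        by blast
      obtain e where eE: "e \<in> E" using ne by auto
      have NN0: "NN ends C E = 0" using NN_zero[OF eE allb[OF eE]] .
      have ps: "E - {e} \<subset> E" using eE by auto
      have IH1: "int (NN ends C (E - {e})) = (-1) ^ num_comps V ends (C \<union> (E - {e})) * DD V ends C (E - {e})"
        using psubset.IH[OF ps, of C] psubset.prems by auto
      have IH2: "int (NN ends (insert e C) (E - {e})) =
          (-1) ^ num_comps V ends (insert e C \<union> (E - {e})) * DD V ends (insert e C) (E - {e})"
        using psubset.IH[OF ps, of "insert e C"] psubset.prems eE by auto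
      have D1: "DD V ends C (E - {e}) = (-1) ^ num_comps V ends (C \<union> (E - {e})) * int (NN ends C (E - {e}))"
        unfolding IH1 by (simp add: mult.assoc[symmetric] neg1_sq)
      have D2: "DD V ends (insert e C) (E - {e}) =
          (-1) ^ num_comps V ends (insert e C \<union> (E - {e})) * int (NN ends (insert e C) (E - {e}))"
        unfolding IH2 by (simp add: mult.assoc[symmetric] neg1_sq)
      have DD0: "DD V ends C E = 0"
      proof (cases "E - {e} = {}")
        case True
        have eV: "fst (ends e) \<in> V" "snd (ends e) \<in> V" using psubset.prems eE by auto
        have nc: "(fst (ends e), snd (ends e)) \<notin> (adj ends C)\<^sup>*" using allb[OF eE] True by simp
        have m: "num_comps V ends C = Suc (num_comps V ends (insert e C))"
          by (rule num_comps_merge[OF finV eV nc])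
        show ?thesis using DD_step[OF psubset.hyps(1) eE, of V ends C] D1 D2 True m
          by (simp add: NN_empty)
      next
        case False
        then obtain f where fE: "f \<in> E - {e}" by auto
        have bf: "(fst (ends f), snd (ends f)) \<notin> (adj ends (C \<union> (E - {f})))\<^sup>*" using allb fE by auto
        have s1: "C \<union> (E - {e} - {f}) \<subseteq> C \<union> (E - {f})" by auto
        have s2: "insert e C \<union> (E - {e} - {f}) \<subseteq> C \<union> (E - {f})" using eE fE by auto
        have b1: "(fst (ends f), snd (ends f)) \<notin> (adj ends (C \<union> (E - {e} - {f})))\<^sup>*"
          using bf rtrancl_mono[OF adj_mono[OF s1]] by blast
        have b2: "(fst (ends f), snd (ends f)) \<notin> (adj ends (insert e C \<union> (E - {e} - {f})))\<^sup>*"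
          using bf rtrancl_mono[OF adj_mono[OF s2]] by blast
        have "NN ends C (E - {e}) = 0" by (rule NN_zero[OF fE b1])
        moreover have "NN ends (insert e C) (E - {e}) = 0" by (rule NN_zero[OF fE b2])
        ultimately show ?thesis using DD_step[OF psubset.hyps(1) eE, of V ends C] D1 D2 by simp
      qed
      show ?thesis using NN0 DD0 by simp
    qed
  qed
qed

lemma cyc_reach:
  assumes dc: "dir_cycle E ends o' cs" and e: "e \<in> set cs"
  shows "(head ends o' e, tail ends o' e) \<in> (arcs ends o' E)\<^sup>*"
proof -
  define n where "n = length cs"
  define T where "T = (\<lambda>k. tail ends o' (cs ! k))"
  have n0: "n > 0" using dc unfolding dir_cycle_def n_def by auto
  have chain: "\<And>i. i < n \<Longrightarrow> head ends o' (cs ! i) = T ((i + 1) mod n)"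
    using dc unfolding dir_cycle_def n_def T_def by auto
  have inE: "\<And>i. i < n \<Longrightarrow> cs ! i \<in> E" using dc unfolding dir_cycle_def n_def by auto
  have cl: "(T k, T ((k + j) mod n)) \<in> (arcs ends o' E)\<^sup>*" if k: "k < n" for k j
  proof (induction j)
    case 0 then show ?case using k by simp
  next
    case (Suc j)
    define m where "m = (k + j) mod n"
    have m: "m < n" using n0 unfolding m_def by simp
    have "(T m, head ends o' (cs ! m)) \<in> arcs ends o' E"
      unfolding arcs_def T_def using inE[OF m] by auto
    moreover have "head ends o' (cs ! m) = T ((k + Suc j) mod n)"
      using chain[OF m] unfolding m_def by (simp add: mod_Suc_eq)
    ultimately show ?case using Suc.IH unfolding m_def by (metis rtrancl.rtrancl_into_rtrancl)
  qed
  obtain i where i: "i < n" "e = cs ! i" using e unfolding n_def by (auto simp: in_set_conv_nth)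
  have "((i + 1) mod n + (n - 1)) mod n = i"
  proof -
    have "((i + 1) mod n + (n - 1)) mod n = (i + 1 + (n - 1)) mod n" by (simp add: mod_add_left_eq)
    also have "i + 1 + (n - 1) = i + n" using n0 by simp
    finally show ?thesis using i by simp
  qed
  then have "(T ((i + 1) mod n), T i) \<in> (arcs ends o' E)\<^sup>*"
    using cl[of "(i + 1) mod n" "n - 1"] n0 by simp
  then show ?thesis using chain[OF i(1)] i unfolding T_def by simp
qed

fun walk :: "'e set \<Rightarrow> ('e \<Rightarrow> 'v \<times> 'v) \<Rightarrow> ('e \<Rightarrow> bool) \<Rightarrow> 'v \<Rightarrow> 'e list \<Rightarrow> 'v \<Rightarrow> bool" where
  "walk E ends o' a [] b \<longleftrightarrow> a = b"
| "walk E ends o' a (f # fs) b \<longleftrightarrow> f \<in> E \<and> tail ends o' f = a \<and> walk E ends o' (head ends o' f) fs b"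

lemma walk_append: "walk E ends o' a (xs @ ys) c \<longleftrightarrow> (\<exists>b. walk E ends o' a xs b \<and> walk E ends o' b ys c)"
  by (induction xs arbitrary: a) auto

lemma reach_walk:
  assumes "(a,b) \<in> (arcs ends o' E)\<^sup>*" shows "\<exists>fs. walk E ends o' a fs b"
  using assms
proof (induction rule: rtrancl_induct)
  case base
  have "walk E ends o' a [] a" by simp
  then show ?case by blast
next
  case (step b c)
  then obtain fs where fs: "walk E ends o' a fs b" by auto
  from step(2) obtain f where f: "f \<in> E" "tail ends o' f = b" "head ends o' f = c"
    unfolding arcs_def by auto
  have "walk E ends o' a (fs @ [f]) c" using fs f by (auto simp: walk_append)
  then show ?case by blast
qed

lemma walk_split: "walk E ends o' a fs b \<Longrightarrow> i < length fs \<Longrightarrow>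
   walk E ends o' a (take i fs) (tail ends o' (fs ! i)) \<and> walk E ends o' (tail ends o' (fs ! i)) (drop i fs) b"
proof -
  assume w: "walk E ends o' a fs b" and i: "i < length fs"
  have "walk E ends o' a (take i fs @ drop i fs) b" using w by simp
  then obtain x where x: "walk E ends o' a (take i fs) x" "walk E ends o' x (drop i fs) b"
    unfolding walk_append by blast
  have "drop i fs = fs ! i # drop (Suc i) fs" using i by (simp add: Cons_nth_drop_Suc)
  then have "x = tail ends o' (fs ! i)" using x(2) by simp
  then show ?thesis using x by simp
qed

lemma walk_shorten:
  "walk E ends o' a fs b \<Longrightarrow> \<exists>fs'. walk E ends o' a fs' b \<and> distinct (map (tail ends o') fs')
      \<and> b \<notin> set (map (tail ends o') fs')"
proof (induction "length fs" arbitrary: fs rule: less_induct)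
  case less
  show ?case
  proof (cases "b \<in> set (map (tail ends o') fs)")
    case True
    then obtain i where i: "i < length fs" "tail ends o' (fs ! i) = b"
      by (auto simp: in_set_conv_nth)
    have "walk E ends o' a (take i fs) b" using walk_split[OF less.prems i(1)] i(2) by simp
    moreover have "length (take i fs) < length fs" using i by simp
    ultimately show ?thesis using less.hyps by blast
  next
    case nb: False
    show ?thesis
    proof (cases "distinct (map (tail ends o') fs)")
      case True then show ?thesis using nb less.prems by blast
    next
      case False
      then obtain i j where ij: "i < j" "j < length fs" "tail ends o' (fs ! i) = tail ends o' (fs ! j)"
        by (auto simp: distinct_conv_nth) (metis linorder_neqE_nat)
      have w1: "walk E ends o' a (take i fs) (tail ends o' (fs ! i))"
        using walk_split[OF less.prems, of i] ij by simp
      have w2: "walk E ends o' (tail ends o' (fs ! j)) (drop j fs) b"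
        using walk_split[OF less.prems, of j] ij by simp
      have "walk E ends o' a (take i fs @ drop j fs) b" using w1 w2 ij(3) walk_append by metis
      moreover have "length (take i fs @ drop j fs) < length fs" using ij by simp
      ultimately show ?thesis using less.hyps by blast
    qed
  qed
qed

lemma walk_set: "walk E ends o' a cs b \<Longrightarrow> set cs \<subseteq> E"
  by (induction cs arbitrary: a) auto

lemma walk_chain: "walk E ends o' a cs b \<Longrightarrow> Suc i < length cs \<Longrightarrow>
    head ends o' (cs ! i) = tail ends o' (cs ! Suc i)"
proof (induction cs arbitrary: a i)
  case Nil then show ?case by simp
next
  case (Cons f fs)
  show ?case
  proof (cases i)
    case 0
    then show ?thesis using Cons.prems by (cases fs) auto
  next
    case (Suc k)
    then show ?thesis using Cons by auto
  qed
qed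

lemma walk_last: "walk E ends o' a cs b \<Longrightarrow> cs \<noteq> [] \<Longrightarrow> head ends o' (last cs) = b"
proof (induction cs arbitrary: a)
  case Nil then show ?case by simp
next
  case (Cons f fs) then show ?case by (cases fs) auto
qed

lemma reach_cyc:
  assumes eE: "e \<in> E" and r: "(head ends o' e, tail ends o' e) \<in> (arcs ends o' E)\<^sup>*"
  shows "\<exists>cs. dir_cycle E ends o' cs \<and> e \<in> set cs"
proof -
  obtain fs where w0: "walk E ends o' (head ends o' e) fs (tail ends o' e)" using reach_walk[OF r] by blast
  obtain ws where ws: "walk E ends o' (head ends o' e) ws (tail ends o' e)"
    "distinct (map (tail ends o') ws)" "tail ends o' e \<notin> set (map (tail ends o') ws)"
    using walk_shorten[OF w0] by blast
  define cs where "cs = e # ws"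
  have wc: "walk E ends o' (tail ends o' e) cs (tail ends o' e)" using ws(1) eE unfolding cs_def by simp
  have "dir_cycle E ends o' cs"
    unfolding dir_cycle_def
  proof (intro conjI allI impI)
    show "cs \<noteq> []" unfolding cs_def by simp
    show dm: "distinct (map (tail ends o') cs)" using ws unfolding cs_def by simp
    then show "distinct cs" by (simp add: distinct_map)
    show "set cs \<subseteq> E" by (rule walk_set[OF wc])
    fix i assume i: "i < length cs"
    show "head ends o' (cs ! i) = tail ends o' (cs ! ((i + 1) mod length cs))"
    proof (cases "Suc i < length cs")
      case True then show ?thesis using walk_chain[OF wc True] by simp
    next
      case False
      then have ii: "i = length cs - 1" using i by auto
      have "i + 1 = length cs" using False i by auto
      then have m: "(i + 1) mod length cs = 0" by simp
      have "head ends o' (cs ! i) = head ends o' (last cs)" using ii by (simp add: cs_def last_conv_nth)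
      also have "\<dots> = tail ends o' e" using walk_last[OF wc] unfolding cs_def by simp
      finally show ?thesis using m unfolding cs_def by simp
    qed
  qed
  then show ?thesis unfolding cs_def by auto
qed

lemma tc_equiv: "totally_cyclic E ends o' \<longleftrightarrow> tcg ends {} E o'"
proof -
  have "(\<forall>e\<in>E. \<exists>cs. dir_cycle E ends o' cs \<and> e \<in> set cs)
     \<longleftrightarrow> (\<forall>e\<in>E. (head ends o' e, tail ends o' e) \<in> (arcs ends o' E)\<^sup>*)"
  proof (intro ball_cong refl iffI)
    fix e assume "e \<in> E" "\<exists>cs. dir_cycle E ends o' cs \<and> e \<in> set cs"
    then obtain cs where "dir_cycle E ends o' cs" "e \<in> set cs" by blast
    then show "(head ends o' e, tail ends o' e) \<in> (arcs ends o' E)\<^sup>*" by (rule cyc_reach)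
  next
    fix e assume "e \<in> E" "(head ends o' e, tail ends o' e) \<in> (arcs ends o' E)\<^sup>*"
    then show "\<exists>cs. dir_cycle E ends o' cs \<and> e \<in> set cs" by (rule reach_cyc)
  qed
  then show ?thesis unfolding totally_cyclic_def tcg_def by simp
qed

lemma card_tc: "card (totally_cyclic_orientations E ends) = NN ends {} E"
  unfolding totally_cyclic_orientations_def NN_def tc_equiv ..

lemma respect_rtrancl:
  assumes resp: "\<forall>e\<in>X. \<psi> (fst (ends e)) = \<psi> (snd (ends e))"
    and r: "(x,y) \<in> (adj ends X)\<^sup>*"
  shows "\<psi> x = \<psi> y"
  using r
proof (induction rule: rtrancl_induct)
  case base then show ?case by simp
next
  case (step y z)
  then obtain e where "e \<in> X" "ends e = (y,z) \<or> ends e = (z,y)" unfolding adj_def by auto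
  then have "\<psi> y = \<psi> z" using resp by (metis fst_conv snd_conv)
  then show ?case using step.IH by simp
qed

lemma count_const:
  assumes finV: "finite V" and inV: "\<forall>e\<in>X. fst (ends e) \<in> V \<and> snd (ends e) \<in> V"
  shows "card {\<psi> \<in> V \<rightarrow>\<^sub>E {1..k::nat}. \<forall>e\<in>X. \<psi> (fst (ends e)) = \<psi> (snd (ends e))}
         = k ^ num_comps V ends X"
proof -
  define K where "K = (\<lambda>x. {y\<in>V. (x,y) \<in> (adj ends X)\<^sup>*})"
  define T where "T = {\<psi> \<in> V \<rightarrow>\<^sub>E {1..k::nat}. \<forall>e\<in>X. \<psi> (fst (ends e)) = \<psi> (snd (ends e))}"
  define F where "F = (\<lambda>g x. if x \<in> V then g (K x) else (undefined::nat))"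
  have sym: "\<And>a b. (a,b) \<in> (adj ends X)\<^sup>* \<Longrightarrow> (b,a) \<in> (adj ends X)\<^sup>*" by (rule adj_rtrancl_sym)
  have Keq: "K a = K b" if "(a,b) \<in> (adj ends X)\<^sup>*" for a b
  proof -
    have "(b,a) \<in> (adj ends X)\<^sup>*" using sym[OF that] .
    then show ?thesis unfolding K_def using class_eq[of a b "adj ends X"] that by auto
  qed
  have Kself: "x \<in> K x" if "x \<in> V" for x using that unfolding K_def by auto
  have bij: "bij_betw F (K ` V \<rightarrow>\<^sub>E {1..k}) T"
  proof (rule bij_betwI')
    fix g1 g2 assume g1: "g1 \<in> K ` V \<rightarrow>\<^sub>E {1..k}" and g2: "g2 \<in> K ` V \<rightarrow>\<^sub>E {1..k}"
    show "(F g1 = F g2) = (g1 = g2)"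
    proof
      assume eq: "F g1 = F g2"
      show "g1 = g2"
      proof
        fix Y show "g1 Y = g2 Y"
        proof (cases "Y \<in> K ` V")
          case True
          then obtain x where x: "x \<in> V" "Y = K x" by auto
          then show ?thesis using fun_cong[OF eq, of x] unfolding F_def by simp
        next
          case False then show ?thesis using g1 g2 by (auto simp: PiE_def extensional_def)
        qed
      qed
    qed simp
  next
    fix g assume g: "g \<in> K ` V \<rightarrow>\<^sub>E {1..k}"
    show "F g \<in> T" unfolding T_def
    proof (intro CollectI conjI ballI)
      show "F g \<in> V \<rightarrow>\<^sub>E {1..k}" using g unfolding F_def by (auto simp: PiE_def extensional_def)
      fix e assume e: "e \<in> X"
      have "(fst (ends e), snd (ends e)) \<in> adj ends X" using e unfolding adj_def by (cases "ends e") auto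
      then have "K (fst (ends e)) = K (snd (ends e))" by (intro Keq) auto
      then show "F g (fst (ends e)) = F g (snd (ends e))" using inV e unfolding F_def by auto
    qed
  next
    fix \<psi> assume psi: "\<psi> \<in> T"
    have resp: "\<forall>e\<in>X. \<psi> (fst (ends e)) = \<psi> (snd (ends e))" and pv: "\<psi> \<in> V \<rightarrow>\<^sub>E {1..k}"
      using psi unfolding T_def by auto
    define g where "g = (\<lambda>Y. if Y \<in> K ` V then \<psi> (SOME y. y \<in> Y) else undefined)"
    have gY: "g (K x) = \<psi> x" if x: "x \<in> V" for x
    proof -
      have "(SOME y. y \<in> K x) \<in> K x" using Kself[OF x] by (rule someI)
      then have "(x, SOME y. y \<in> K x) \<in> (adj ends X)\<^sup>*" unfolding K_def by auto
      then have "\<psi> x = \<psi> (SOME y. y \<in> K x)" by (rule respect_rtrancl[OF resp])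
      then show ?thesis unfolding g_def using x by auto
    qed
    show "\<exists>g\<in>K ` V \<rightarrow>\<^sub>E {1..k}. \<psi> = F g"
    proof (intro bexI)
      show "\<psi> = F g"
      proof
        fix x show "\<psi> x = F g x"
          using gY pv unfolding F_def by (cases "x \<in> V") (auto simp: PiE_def extensional_def)
      qed
      show "g \<in> K ` V \<rightarrow>\<^sub>E {1..k}"
        using gY pv unfolding g_def by (auto simp: PiE_def extensional_def Pi_def)
    qed
  qed
  have "card T = card (K ` V \<rightarrow>\<^sub>E {1..k})" using bij_betw_same_card[OF bij] by simp
  also have "\<dots> = k ^ card (K ` V)" using finV by (simp add: card_PiE)
  also have "card (K ` V) = num_comps V ends X" unfolding num_comps_alt K_def ..
  finally show ?thesis unfolding T_def .
qed


lemma card3_gt1: "1 < card {x, y, z} \<longleftrightarrow> \<not> (x = z \<and> y = z)"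
  by (auto simp: card_insert_if)

lemma prod_if_zero:
  assumes "finite X"
  shows "(\<Prod>e\<in>X. if P e then (a::int) else 0) = (if \<forall>e\<in>X. P e then a ^ card X else 0)"
  using assms by (induction X rule: finite_induct) auto

lemma card_weak:
  assumes finV: "finite V" and finE: "finite E"
    and inV: "\<forall>e\<in>E. fst (ends e) \<in> V \<and> snd (ends e) \<in> V"
  shows "int (card (weak_colourings (hyp_of V E ends) k)) =
    (\<Sum>X\<in>Pow E. (-1) ^ card X * int k ^ (card E - card X + num_comps V ends X))"
proof -
  define U where "U = fst \<circ> ends"
  define W where "W = snd \<circ> ends"
  define D where "D = (V \<rightarrow>\<^sub>E {1..k}) \<times> (E \<rightarrow>\<^sub>E {1..k})"
  define G where "G = (\<lambda>p::('a \<Rightarrow> nat) \<times> ('b \<Rightarrow> nat). case_sum (fst p) (snd p))"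
  define P where "P = (\<lambda>\<phi>::'a + 'b \<Rightarrow> nat. \<forall>e\<in>E. \<not> (\<phi> (Inl (U e)) = \<phi> (Inr e) \<and> \<phi> (Inl (W e)) = \<phi> (Inr e)))"
  have wc: "weak_colourings (hyp_of V E ends) k = {\<phi> \<in> (Inl ` V \<union> Inr ` E) \<rightarrow>\<^sub>E {1..k}. P \<phi>}"
    unfolding weak_colourings_def hyp_of_def hg_verts_def hg_edges_def P_def U_def W_def
    by (simp add: card3_gt1[unfolded One_nat_def])
  have GD: "G ` D = (Inl ` V \<union> Inr ` E) \<rightarrow>\<^sub>E {1..k}"
  proof
    show "G ` D \<subseteq> (Inl ` V \<union> Inr ` E) \<rightarrow>\<^sub>E {1..k}"
    proof
      fix \<phi> assume "\<phi> \<in> G ` D"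
      then obtain \<psi> \<omega> where p: "\<psi> \<in> V \<rightarrow>\<^sub>E {1..k}" "\<omega> \<in> E \<rightarrow>\<^sub>E {1..k}" "\<phi> = case_sum \<psi> \<omega>"
        unfolding G_def D_def by auto
      show "\<phi> \<in> (Inl ` V \<union> Inr ` E) \<rightarrow>\<^sub>E {1..k}"
        unfolding PiE_def Pi_def extensional_def
      proof (intro CollectI IntI allI impI ballI)
        fix z assume "z \<in> Inl ` V \<union> Inr ` E"
        then show "\<phi> z \<in> {1..k}" using p by (auto simp: PiE_def Pi_def)
      next
        fix z assume "z \<notin> Inl ` V \<union> Inr ` E"
        then show "\<phi> z = undefined" using p by (cases z) (auto simp: PiE_def extensional_def)
      qed
    qed
    show "(Inl ` V \<union> Inr ` E) \<rightarrow>\<^sub>E {1..k} \<subseteq> G ` D"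
    proof
      fix \<phi> assume ph: "\<phi> \<in> (Inl ` V \<union> Inr ` E) \<rightarrow>\<^sub>E {1..k}"
      have "(\<lambda>x. \<phi> (Inl x), \<lambda>e. \<phi> (Inr e)) \<in> D"
        using ph unfolding D_def by (auto simp: PiE_def Pi_def extensional_def)
      moreover have "\<phi> = G (\<lambda>x. \<phi> (Inl x), \<lambda>e. \<phi> (Inr e))"
      proof
        fix z show "\<phi> z = G (\<lambda>x. \<phi> (Inl x), \<lambda>e. \<phi> (Inr e)) z" unfolding G_def by (cases z) auto
      qed
      ultimately show "\<phi> \<in> G ` D" by blast
    qed
  qed
  have injG: "inj_on G D"
  proof (rule inj_onI)
    fix p q assume "p \<in> D" "q \<in> D" and eq: "G p = G q"
    have "fst p = fst q"
    proof fix x show "fst p x = fst q x" using fun_cong[OF eq, of "Inl x"] unfolding G_def by simp qed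
    moreover have "snd p = snd q"
    proof fix x show "snd p x = snd q x" using fun_cong[OF eq, of "Inr x"] unfolding G_def by simp qed
    ultimately show "p = q" by (simp add: prod_eq_iff)
  qed
  have "{\<phi> \<in> (Inl ` V \<union> Inr ` E) \<rightarrow>\<^sub>E {1..k}. P \<phi>} = G ` {p \<in> D. P (G p)}"
    unfolding GD[symmetric] by auto
  then have c1: "card (weak_colourings (hyp_of V E ends) k) = card {p \<in> D. P (G p)}"
    unfolding wc by (simp add: card_image inj_on_subset[OF injG])
  define M where "M = (\<lambda>\<psi>::'a \<Rightarrow> nat. \<lambda>e. \<psi> (U e) = \<psi> (W e))"
  have sig: "{p \<in> D. P (G p)} = Sigma (V \<rightarrow>\<^sub>E {1..k})
      (\<lambda>\<psi>. Pi\<^sub>E E (\<lambda>e. {c \<in> {1..k}. \<not> (\<psi> (U e) = c \<and> \<psi> (W e) = c)}))"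
    unfolding D_def G_def P_def by (auto simp: PiE_def Pi_def)
  have cfib: "int (card (Pi\<^sub>E E (\<lambda>e. {c \<in> {1..k}. \<not> (\<psi> (U e) = c \<and> \<psi> (W e) = c)})))
      = (\<Prod>e\<in>E. (if M \<psi> e then -1 else 0) + int k)" if psi: "\<psi> \<in> V \<rightarrow>\<^sub>E {1..k}" for \<psi>
  proof -
    have "card (Pi\<^sub>E E (\<lambda>e. {c \<in> {1..k}. \<not> (\<psi> (U e) = c \<and> \<psi> (W e) = c)}))
       = (\<Prod>e\<in>E. card {c \<in> {1..k}. \<not> (\<psi> (U e) = c \<and> \<psi> (W e) = c)})"
      using finE by (rule card_PiE)
    moreover have "int (card {c \<in> {1..k}. \<not> (\<psi> (U e) = c \<and> \<psi> (W e) = c)})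
        = (if M \<psi> e then -1 else 0) + int k" if e: "e \<in> E" for e
    proof (cases "M \<psi> e")
      case True
      have uV: "U e \<in> V" using inV e unfolding U_def by auto
      then have mem: "\<psi> (U e) \<in> {1..k}" using psi by (auto simp: PiE_def Pi_def)
      have "{c \<in> {1..k}. \<not> (\<psi> (U e) = c \<and> \<psi> (W e) = c)} = {1..k} - {\<psi> (U e)}"
        using True unfolding M_def by auto
      then have "card {c \<in> {1..k}. \<not> (\<psi> (U e) = c \<and> \<psi> (W e) = c)} = k - 1"
        using mem by simp
      then show ?thesis using True mem by auto
    next
      case False
      then have "{c \<in> {1..k}. \<not> (\<psi> (U e) = c \<and> \<psi> (W e) = c)} = {1..k}"
        unfolding M_def by auto
      then show ?thesis using False by simp
    qed
    ultimately show ?thesis by (simp add: of_nat_prod)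
  qed
  have "int (card {p \<in> D. P (G p)}) = (\<Sum>\<psi>\<in>V \<rightarrow>\<^sub>E {1..k}.
        int (card (Pi\<^sub>E E (\<lambda>e. {c \<in> {1..k}. \<not> (\<psi> (U e) = c \<and> \<psi> (W e) = c)}))))"
    unfolding sig using finV finE by (subst card_SigmaI) (auto simp: finite_PiE of_nat_sum)
  also have "\<dots> = (\<Sum>\<psi>\<in>V \<rightarrow>\<^sub>E {1..k}. \<Prod>e\<in>E. (if M \<psi> e then -1 else 0) + int k)"
    by (rule sum.cong[OF refl]) (rule cfib)
  also have "\<dots> = (\<Sum>\<psi>\<in>V \<rightarrow>\<^sub>E {1..k}. \<Sum>X\<in>Pow E.
        (if \<forall>e\<in>X. M \<psi> e then (-1) ^ card X else 0) * int k ^ (card E - card X))"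
  proof (rule sum.cong[OF refl])
    fix \<psi>
    have "(\<Prod>e\<in>E. (if M \<psi> e then -1 else 0) + int k) = (\<Sum>X\<in>Pow E.
        (\<Prod>e\<in>X. if M \<psi> e then -1 else 0) * (\<Prod>e\<in>E - X. int k))"
      by (rule prod_add[OF finE])
    also have "\<dots> = (\<Sum>X\<in>Pow E. (if \<forall>e\<in>X. M \<psi> e then (-1) ^ card X else 0) * int k ^ (card E - card X))"
    proof (rule sum.cong[OF refl])
      fix X assume X: "X \<in> Pow E"
      then have fX: "finite X" using finE finite_subset by auto
      have "(\<Prod>e\<in>E - X. int k) = int k ^ (card E - card X)"
        using X fX by (simp add: card_Diff_subset)
      then show "(\<Prod>e\<in>X. if M \<psi> e then -1 else 0) * (\<Prod>e\<in>E - X. int k) =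
          (if \<forall>e\<in>X. M \<psi> e then (-1) ^ card X else 0) * int k ^ (card E - card X)"
        using prod_if_zero[OF fX, of "M \<psi>" "-1"] by simp
    qed
    finally show "(\<Prod>e\<in>E. (if M \<psi> e then -1 else 0) + int k) = (\<Sum>X\<in>Pow E.
        (if \<forall>e\<in>X. M \<psi> e then (-1) ^ card X else 0) * int k ^ (card E - card X))" .
  qed
  also have "\<dots> = (\<Sum>X\<in>Pow E. \<Sum>\<psi>\<in>V \<rightarrow>\<^sub>E {1..k}.
        (if \<forall>e\<in>X. M \<psi> e then (-1) ^ card X else 0) * int k ^ (card E - card X))"
    by (rule sum.swap)
  also have "\<dots> = (\<Sum>X\<in>Pow E. (-1) ^ card X * int k ^ (card E - card X + num_comps V ends X))"
  proof (rule sum.cong[OF refl])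
    fix X assume X: "X \<in> Pow E"
    have inX: "\<forall>e\<in>X. fst (ends e) \<in> V \<and> snd (ends e) \<in> V" using X inV by auto
    have "(\<Sum>\<psi>\<in>V \<rightarrow>\<^sub>E {1..k}. (if \<forall>e\<in>X. M \<psi> e then (-1) ^ card X else 0) * int k ^ (card E - card X))
       = (\<Sum>\<psi>\<in>V \<rightarrow>\<^sub>E {1..k}. (if \<forall>e\<in>X. M \<psi> e then 1 else 0)) * ((-1) ^ card X * int k ^ (card E - card X))"
      unfolding sum_distrib_right by (rule sum.cong) auto
    also have "(\<Sum>\<psi>\<in>V \<rightarrow>\<^sub>E {1..k}. (if \<forall>e\<in>X. M \<psi> e then 1 else 0))
        = int (card {\<psi> \<in> V \<rightarrow>\<^sub>E {1..k}. \<forall>e\<in>X. M \<psi> e})"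
      using finV by (simp add: card_filter_sum finite_PiE)
    also have "card {\<psi> \<in> V \<rightarrow>\<^sub>E {1..k}. \<forall>e\<in>X. M \<psi> e} = k ^ num_comps V ends X"
      unfolding M_def U_def W_def using count_const[OF finV inX, of k] by simp
    finally show "(\<Sum>\<psi>\<in>V \<rightarrow>\<^sub>E {1..k}. (if \<forall>e\<in>X. M \<psi> e then (-1) ^ card X else 0) * int k ^ (card E - card X))
       = (-1) ^ card X * int k ^ (card E - card X + num_comps V ends X)"
      by (simp add: power_add algebra_simps)
  qed
  finally show ?thesis using c1 by simp
qed

definition cpoly :: "'v set \<Rightarrow> 'e set \<Rightarrow> ('e \<Rightarrow> 'v \<times> 'v) \<Rightarrow> int poly" where
  "cpoly V E ends = (\<Sum>X\<in>Pow E. monom ((-1::int) ^ card X) (card E - card X + num_comps V ends X))"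

lemma poly_cpoly: "poly (cpoly V E ends) x = (\<Sum>X\<in>Pow E. (-1) ^ card X * x ^ (card E - card X + num_comps V ends X))"
  unfolding cpoly_def by (simp add: poly_sum poly_monom)

lemma inf_nat_ge1: "infinite {1::nat..}"
  by (simp add: infinite_Ici)

lemma chrom_eq:
  assumes finV: "finite V" and finE: "finite E"
    and inV: "\<forall>e\<in>E. fst (ends e) \<in> V \<and> snd (ends e) \<in> V"
  shows "hg_chrom_poly (hyp_of V E ends) = cpoly V E ends"
proof -
  have P: "\<forall>k::nat. k \<ge> 1 \<longrightarrow> poly (cpoly V E ends) (int k) = int (card (weak_colourings (hyp_of V E ends) k))"
    by (simp only: card_weak[OF finV finE inV] poly_cpoly) simp
  show ?thesis unfolding hg_chrom_poly_def
  proof (rule the_equality)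
    show "\<forall>k::nat. k \<ge> 1 \<longrightarrow> poly (cpoly V E ends) (int k) = int (card (weak_colourings (hyp_of V E ends) k))"
      by (rule P)
    fix q assume Q: "\<forall>k::nat. k \<ge> 1 \<longrightarrow> poly q (int k) = int (card (weak_colourings (hyp_of V E ends) k))"
    show "q = cpoly V E ends"
    proof (rule ccontr)
      assume "q \<noteq> cpoly V E ends"
      then have "q - cpoly V E ends \<noteq> 0" by simp
      then have fin: "finite {x. poly (q - cpoly V E ends) x = 0}" by (rule poly_roots_finite)
      have sub: "int ` {1..} \<subseteq> {x. poly (q - cpoly V E ends) x = 0}" using P Q by auto
      have "finite (int ` {1::nat..})" using finite_subset[OF sub fin] .
      then have "finite {1::nat..}" using finite_imageD inj_on_def by (metis of_nat_eq_iff)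
      then show False using inf_nat_ge1 by simp
    qed
  qed
qed

lemma neg1_split: "m \<le> n \<Longrightarrow> (-1::int) ^ m * (-1) ^ (n - m) = (-1) ^ n"
  by (simp add: power_add[symmetric])

theorem corollary2:
  fixes V :: "'v set" and E :: "'e set" and ends :: "'e \<Rightarrow> 'v \<times> 'v"
  assumes "multigraph V E ends"
  shows "\<bar>poly (hg_chrom_poly (hyp_of V E ends)) (-1)\<bar> = tutte V E ends 0 2
       \<and> tutte V E ends 0 2 = int (card (totally_cyclic_orientations E ends))"
proof -
  have finV: "finite V" and finE: "finite E" and inV: "\<forall>e\<in>E. fst (ends e) \<in> V \<and> snd (ends e) \<in> V"
    using assms unfolding multigraph_def by auto
  define N where "N = NN ends {} E"
  define D where "D = DD V ends {} E"
  define c where "c = num_comps V ends E"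
  have mainE: "int N = (-1) ^ c * D"
    using main_NN[OF finV finE, of "{}" ends] inV unfolding N_def D_def c_def by simp
  have DN: "D = (-1) ^ c * int N" unfolding mainE by (simp add: mult.assoc[symmetric] neg1_sq)
  have D_alt: "D = (\<Sum>X\<in>Pow E. (-1::int) ^ num_comps V ends X)" unfolding D_def DD_def by simp
  have polyv: "poly (hg_chrom_poly (hyp_of V E ends)) (-1) = (-1) ^ card E * D"
  proof -
    have "poly (hg_chrom_poly (hyp_of V E ends)) (-1)
        = (\<Sum>X\<in>Pow E. (-1) ^ card X * (-1) ^ (card E - card X + num_comps V ends X))"
      unfolding chrom_eq[OF finV finE inV] poly_cpoly ..
    also have "\<dots> = (\<Sum>X\<in>Pow E. (-1) ^ card E * (-1::int) ^ num_comps V ends X)"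
    proof (rule sum.cong[OF refl])
      fix X assume "X \<in> Pow E"
      then have "card X \<le> card E" using finE by (simp add: card_mono)
      then show "(-1) ^ card X * (-1) ^ (card E - card X + num_comps V ends X)
          = (-1) ^ card E * (-1::int) ^ num_comps V ends X"
        by (simp add: power_add mult.assoc[symmetric] neg1_split)
    qed
    also have "\<dots> = (-1) ^ card E * D" unfolding D_alt by (simp add: sum_distrib_left)
    finally show ?thesis .
  qed
  have tut: "tutte V E ends 0 2 = (-1) ^ c * D"
  proof -
    have "tutte V E ends 0 2 = (\<Sum>X\<in>Pow E. (-1) ^ (rank V ends E - rank V ends X))"
      unfolding tutte_def by simp
    also have "\<dots> = (\<Sum>X\<in>Pow E. (-1) ^ c * (-1::int) ^ num_comps V ends X)"
    proof (rule sum.cong[OF refl])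
      fix X assume X: "X \<in> Pow E"
      have le1: "c \<le> num_comps V ends X" unfolding c_def using num_comps_mono[OF finV] X by auto
      have le2: "num_comps V ends X \<le> card V" by (rule num_comps_le[OF finV])
      have "rank V ends E - rank V ends X = num_comps V ends X - c"
        unfolding rank_def c_def using le1 le2 unfolding c_def by simp
      moreover have "(-1::int) ^ (num_comps V ends X - c) = (-1) ^ c * (-1) ^ num_comps V ends X"
        using neg1_split[OF le1] neg1_sq[of c] by (metis mult.assoc mult.commute mult_1)
      ultimately show "(-1) ^ (rank V ends E - rank V ends X) = (-1) ^ c * (-1::int) ^ num_comps V ends X"
        by simp
    qed
    also have "\<dots> = (-1) ^ c * D" unfolding D_alt by (simp add: sum_distrib_left)
    finally show ?thesis .
  qed
  have t2: "tutte V E ends 0 2 = int N" unfolding tut mainE ..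
  have a1: "\<bar>poly (hg_chrom_poly (hyp_of V E ends)) (-1)\<bar> = int N"
    unfolding polyv DN by (simp add: abs_mult power_abs)
  show ?thesis using a1 t2 card_tc[of E ends] unfolding N_def by simp
qed

end
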